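(* Let $r\in[0,1]$, $\theta\in[0,1]$, $K_+,K_-\in\mathbb N_0$. There exist a dataset space of finite sets, datasets $x\simeq_{K_+,K_-}x'$, and a function $h:\mathbb Y\to\{0,1\}$ such that the Poisson-subsampled (rate $r$) randomized response mechanism $M=B\circ S$, $B(y)=|h(y)-(1-V)|$ with $V\sim\mathrm{Bern}(\theta)$, satisfies $$\Psi_\alpha(m_x\|m_{x'})=\max_{\tau\in\{\theta,1-\theta\}}\Psi_\alpha\big((1-w^{(1)})\mathrm{Bern}(\cdot\mid\theta)+w^{(1)}\mathrm{Bern}(\cdot\mid\tau)\ \big\|\ (1-w^{(2)})\mathrm{Bern}(\cdot\mid\theta)+w^{(2)}\mathrm{Bern}(\cdot\mid1-\tau)\big),$$ where $w^{(1)}=1-(1-r)^{K_-}$ and $w^{(2)}=1-(1-r)^{K_+}$.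
   Context: Batches are subsets $y\subseteq x$; Poisson subsampling with rate $r$: $s_x(y)=r^{|y|}(1-r)^{|x|-|y|}$ for $y\subseteq x$; $m_x(z)=\sum_y b_y(z)s_x(y)$ with $b_y$ the pmf of $B(y)$ on $\{0,1\}$. $\mathrm{Bern}(\cdot\mid p)$ is the pmf on $\{0,1\}$ with mass $p$ at $1$. $x\simeq_{K_+,K_-}x'$ iff $x'=(x\setminus g_-)\cup g_+$ with $g_-\subseteq x$, $|g_-|=K_-$, $g_+\cap x=\emptyset$, $|g_+|=K_+$. On $\{0,1\}$: $H_\alpha(p\|q)=\sum_z\max\{p(z)-\alpha q(z),0\}$ ($\alpha\ge0$), $\Lambda_\alpha(p\|q)=\sum_z p(z)^\alpha q(z)^{1-\alpha}$ ($\alpha>1$); $\Psi_\alpha$ is either. *)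

theory Defs
  imports "HOL-Analysis.Analysis"
begin

text \<open>Outcomes of the mechanism live in {0,1} (as naturals). Datasets are finite sets of naturals.\<close>

definition bern :: "real \<Rightarrow> nat \<Rightarrow> real" where
  "bern p z = (if z = 1 then p else if z = 0 then 1 - p else 0)"

definition rr_pmf :: "real \<Rightarrow> nat \<Rightarrow> nat \<Rightarrow> real" where
  "rr_pmf \<theta> hv z = (\<Sum>v\<in>{0,1::nat}. bern \<theta> v * (if z = nat \<bar>int hv - (1 - int v)\<bar> then 1 else 0))"

definition poisson_sub :: "real \<Rightarrow> nat set \<Rightarrow> nat set \<Rightarrow> real" where
  "poisson_sub r x y = (if y \<subseteq> x then r ^ card y * (1 - r) ^ (card x - card y) else 0)"

definition mech_pmf :: "real \<Rightarrow> real \<Rightarrow> (nat set \<Rightarrow> nat) \<Rightarrow> nat set \<Rightarrow> nat \<Rightarrow> real" where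
  "mech_pmf r \<theta> h x z = (\<Sum>y\<in>Pow x. rr_pmf \<theta> (h y) z * poisson_sub r x y)"

definition neighbouring :: "nat \<Rightarrow> nat \<Rightarrow> nat set \<Rightarrow> nat set \<Rightarrow> bool" where
  "neighbouring Kp Km x x' \<longleftrightarrow> (\<exists>gm gp. gm \<subseteq> x \<and> card gm = Km \<and> finite gp \<and> gp \<inter> x = {}
      \<and> card gp = Kp \<and> x' = (x - gm) \<union> gp)"

definition hockey :: "real \<Rightarrow> (nat \<Rightarrow> real) \<Rightarrow> (nat \<Rightarrow> real) \<Rightarrow> real" where
  "hockey \<alpha> p q = (\<Sum>z\<in>{0,1::nat}. max (p z - \<alpha> * q z) 0)"

definition renyi_moment :: "real \<Rightarrow> (nat \<Rightarrow> real) \<Rightarrow> (nat \<Rightarrow> real) \<Rightarrow> ereal" where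
  "renyi_moment \<alpha> p q = (\<Sum>z\<in>{0,1::nat}.
      (if q z = 0 then (if p z = 0 then 0 else \<infinity>) else ereal (p z powr \<alpha> * q z powr (1 - \<alpha>))))"

definition mix :: "real \<Rightarrow> real \<Rightarrow> real \<Rightarrow> nat \<Rightarrow> real" where
  "mix w p q z = (1 - w) * bern p z + w * bern q z"

end

theory Submission imports Defs begin

lemma binom_pow:
  fixes p q :: real
  assumes "finite A"
  shows "(\<Sum>y\<in>Pow A. p ^ card y * q ^ (card A - card y)) = (p + q) ^ card A"
  using assms
proof (induction A rule: finite_induct)
  case empty
  then show ?case by simp
next
  case (insert a A)
  have fin: "finite (Pow A)" using insert by simp
  have disj: "Pow A \<inter> insert a ` Pow A = {}" using insert by auto
  have inj: "inj_on (insert a) (Pow A)" using insert by (auto simp: inj_on_def)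
  have c: "card (insert a A) = Suc (card A)" using insert by simp
  have s1: "(\<Sum>y\<in>Pow A. p ^ card y * q ^ (card (insert a A) - card y)) = q * (\<Sum>y\<in>Pow A. p ^ card y * q ^ (card A - card y))"
    unfolding sum_distrib_left
  proof (rule sum.cong)
    fix y assume "y \<in> Pow A"
    then have "card y \<le> card A" using insert by (simp add: card_mono)
    then have "card (insert a A) - card y = Suc (card A - card y)" using c by simp
    then show "p ^ card y * q ^ (card (insert a A) - card y) = q * (p ^ card y * q ^ (card A - card y))" by simp
  qed simp
  have s2: "(\<Sum>y\<in>insert a ` Pow A. p ^ card y * q ^ (card (insert a A) - card y)) = p * (\<Sum>y\<in>Pow A. p ^ card y * q ^ (card A - card y))"
    unfolding sum_distrib_left sum.reindex[OF inj] o_def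
  proof (rule sum.cong)
    fix y assume "y \<in> Pow A"
    then have "finite y" "a \<notin> y" using insert finite_subset by auto
    then have "card (insert a y) = Suc (card y)" by simp
    then show "p ^ card (insert a y) * q ^ (card (insert a A) - card (insert a y)) = p * (p ^ card y * q ^ (card A - card y))" using c by simp
  qed simp
  have "(\<Sum>y\<in>Pow (insert a A). p ^ card y * q ^ (card (insert a A) - card y))
      = (\<Sum>y\<in>Pow A. p ^ card y * q ^ (card (insert a A) - card y)) + (\<Sum>y\<in>insert a ` Pow A. p ^ card y * q ^ (card (insert a A) - card y))"
    unfolding Pow_insert by (rule sum.union_disjoint) (use fin disj in auto)
  also have "\<dots> = (p + q) * (p + q) ^ card A" using s1 s2 insert.IH by (simp add: algebra_simps)
  finally show ?case using c by simp
qed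

lemma rr1: "rr_pmf \<theta> 1 z = bern \<theta> z"
  by (simp add: rr_pmf_def bern_def)
lemma rr1': "rr_pmf \<theta> (Suc 0) z = bern \<theta> z"
  by (simp add: rr_pmf_def bern_def)
lemma rr0: "rr_pmf \<theta> 0 z = bern (1 - \<theta>) z"
  by (simp add: rr_pmf_def bern_def)

lemma mech_eq:
  fixes r \<theta> :: real
  assumes "finite x" "\<And>y. y \<subseteq> x \<Longrightarrow> y \<noteq> {} \<Longrightarrow> h y = a" "h {} = 1" "a = 0 \<or> a = 1"
  shows "mech_pmf r \<theta> h x = mix (1 - (1 - r) ^ card x) \<theta> (if a = 1 then \<theta> else 1 - \<theta>)"
proof
  fix z
  let ?t = "if a = 1 then \<theta> else 1 - \<theta>"
  have rra: "rr_pmf \<theta> a z = bern ?t z" using assms(4) rr0 rr1 by auto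
  have tot: "(\<Sum>y\<in>Pow x. poisson_sub r x y) = 1"
    using binom_pow[OF assms(1), of r "1 - r"] by (simp add: poisson_sub_def)
  have "mech_pmf r \<theta> h x z = rr_pmf \<theta> (h {}) z * poisson_sub r x {} + (\<Sum>y\<in>Pow x - {{}}. rr_pmf \<theta> (h y) z * poisson_sub r x y)"
    unfolding mech_pmf_def using assms(1) by (subst sum.remove[of _ "{}"]) auto
  also have "(\<Sum>y\<in>Pow x - {{}}. rr_pmf \<theta> (h y) z * poisson_sub r x y) = bern ?t z * (\<Sum>y\<in>Pow x - {{}}. poisson_sub r x y)"
    unfolding sum_distrib_left by (rule sum.cong) (use assms(2) rra in auto)
  also have "(\<Sum>y\<in>Pow x - {{}}. poisson_sub r x y) = 1 - (1 - r) ^ card x"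
    using tot assms(1) by (subst (asm) sum.remove[of _ "{}"]) (auto simp: poisson_sub_def)
  finally show "mech_pmf r \<theta> h x z = mix (1 - (1 - r) ^ card x) \<theta> ?t z"
    using assms(3) by (simp add: mix_def rr1' poisson_sub_def algebra_simps)
qed


lemma construct:
  fixes r \<theta> :: real and Kp Km a :: nat
  assumes a: "a = 0 \<or> a = 1"
  shows "\<exists>x x' :: nat set. \<exists>h :: nat set \<Rightarrow> nat.
     finite x \<and> finite x' \<and> neighbouring Kp Km x x' \<and> (\<forall>y. h y \<in> {0, 1}) \<and>
     mech_pmf r \<theta> h x = mix (1 - (1 - r) ^ Km) \<theta> (if a = 1 then \<theta> else 1 - \<theta>) \<and>
     mech_pmf r \<theta> h x' = mix (1 - (1 - r) ^ Kp) \<theta> (if a = 1 then 1 - \<theta> else 1 - (1 - \<theta>))"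
proof -
  define x where "x = {0..<Km}"
  define x' where "x' = {Km..<Km+Kp}"
  define h where "h y = (if y = {} then 1 else if y \<subseteq> x then a else 1 - a)" for y
  have f: "finite x" "finite x'" unfolding x_def x'_def by auto
  have n: "neighbouring Kp Km x x'" unfolding neighbouring_def
    by (rule exI[of _ x], rule exI[of _ x']) (auto simp: x_def x'_def)
  have hv: "\<forall>y. h y \<in> {0, 1}" using a by (auto simp: h_def)
  have m1: "mech_pmf r \<theta> h x = mix (1 - (1 - r) ^ card x) \<theta> (if a = 1 then \<theta> else 1 - \<theta>)"
    by (rule mech_eq) (use f a in \<open>auto simp: h_def\<close>)
  have m2: "mech_pmf r \<theta> h x' = mix (1 - (1 - r) ^ card x') \<theta> (if 1 - a = 1 then \<theta> else 1 - \<theta>)"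
  proof (rule mech_eq)
    fix y assume "y \<subseteq> x'" "y \<noteq> {}"
    then have "\<not> y \<subseteq> x" unfolding x_def x'_def by fastforce
    then show "h y = 1 - a" using \<open>y \<noteq> {}\<close> by (simp add: h_def)
  qed (use f a in \<open>auto simp: h_def\<close>)
  have cx: "card x = Km" "card x' = Kp" unfolding x_def x'_def by auto
  show ?thesis
    apply (rule exI[of _ x], rule exI[of _ x'], rule exI[of _ h])
    using f n hv m1 m2 cx a by auto
qed

theorem mainTheorem10:
  fixes r \<theta> :: real and Kp Km :: nat
  assumes "0 \<le> r" "r \<le> 1" "0 \<le> \<theta>" "\<theta> \<le> 1"
  defines "w1 \<equiv> 1 - (1 - r) ^ Km" and "w2 \<equiv> 1 - (1 - r) ^ Kp"
  shows "(\<forall>\<alpha>::real. \<alpha> \<ge> 0 \<longrightarrow>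
            (\<exists>x x' :: nat set. \<exists>h :: nat set \<Rightarrow> nat.
               finite x \<and> finite x' \<and> neighbouring Kp Km x x' \<and> (\<forall>y. h y \<in> {0, 1}) \<and>
               hockey \<alpha> (mech_pmf r \<theta> h x) (mech_pmf r \<theta> h x') =
                 max (hockey \<alpha> (mix w1 \<theta> \<theta>) (mix w2 \<theta> (1 - \<theta>)))
                     (hockey \<alpha> (mix w1 \<theta> (1 - \<theta>)) (mix w2 \<theta> (1 - (1 - \<theta>))))))
       \<and> (\<forall>\<alpha>::real. \<alpha> > 1 \<longrightarrow>
            (\<exists>x x' :: nat set. \<exists>h :: nat set \<Rightarrow> nat.
               finite x \<and> finite x' \<and> neighbouring Kp Km x x' \<and> (\<forall>y. h y \<in> {0, 1}) \<and>
               renyi_moment \<alpha> (mech_pmf r \<theta> h x) (mech_pmf r \<theta> h x') =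
                 max (renyi_moment \<alpha> (mix w1 \<theta> \<theta>) (mix w2 \<theta> (1 - \<theta>)))
                     (renyi_moment \<alpha> (mix w1 \<theta> (1 - \<theta>)) (mix w2 \<theta> (1 - (1 - \<theta>))))))"
proof (intro conjI allI impI)
  fix \<alpha> :: real
  obtain x1 x1' h1 where A: "finite x1 \<and> finite x1' \<and> neighbouring Kp Km x1 x1' \<and> (\<forall>y. h1 y \<in> {0, 1}) \<and>
     mech_pmf r \<theta> h1 x1 = mix w1 \<theta> \<theta> \<and> mech_pmf r \<theta> h1 x1' = mix w2 \<theta> (1 - \<theta>)"
    using construct[of 1 Kp Km r \<theta>] unfolding w1_def w2_def by auto
  obtain x0 x0' h0 where B: "finite x0 \<and> finite x0' \<and> neighbouring Kp Km x0 x0' \<and> (\<forall>y. h0 y \<in> {0, 1}) \<and>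
     mech_pmf r \<theta> h0 x0 = mix w1 \<theta> (1 - \<theta>) \<and> mech_pmf r \<theta> h0 x0' = mix w2 \<theta> (1 - (1 - \<theta>))"
    using construct[of 0 Kp Km r \<theta>] unfolding w1_def w2_def by auto
  {
    assume "\<alpha> \<ge> 0"
    show "\<exists>x x' :: nat set. \<exists>h :: nat set \<Rightarrow> nat.
               finite x \<and> finite x' \<and> neighbouring Kp Km x x' \<and> (\<forall>y. h y \<in> {0, 1}) \<and>
               hockey \<alpha> (mech_pmf r \<theta> h x) (mech_pmf r \<theta> h x') =
                 max (hockey \<alpha> (mix w1 \<theta> \<theta>) (mix w2 \<theta> (1 - \<theta>)))
                     (hockey \<alpha> (mix w1 \<theta> (1 - \<theta>)) (mix w2 \<theta> (1 - (1 - \<theta>))))"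
    proof (cases "hockey \<alpha> (mix w1 \<theta> (1 - \<theta>)) (mix w2 \<theta> (1 - (1 - \<theta>))) \<le> hockey \<alpha> (mix w1 \<theta> \<theta>) (mix w2 \<theta> (1 - \<theta>))")
      case True
      then show ?thesis using A by (intro exI[where x=x1] exI[where x=x1'] exI[where x=h1]) (auto simp: max_def)
    next
      case False
      then show ?thesis using B by (intro exI[where x=x0] exI[where x=x0'] exI[where x=h0]) (auto simp: max_def)
    qed
  }
  {
    assume "\<alpha> > 1"
    show "\<exists>x x' :: nat set. \<exists>h :: nat set \<Rightarrow> nat.
               finite x \<and> finite x' \<and> neighbouring Kp Km x x' \<and> (\<forall>y. h y \<in> {0, 1}) \<and>
               renyi_moment \<alpha> (mech_pmf r \<theta> h x) (mech_pmf r \<theta> h x') =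
                 max (renyi_moment \<alpha> (mix w1 \<theta> \<theta>) (mix w2 \<theta> (1 - \<theta>)))
                     (renyi_moment \<alpha> (mix w1 \<theta> (1 - \<theta>)) (mix w2 \<theta> (1 - (1 - \<theta>))))"
    proof (cases "renyi_moment \<alpha> (mix w1 \<theta> (1 - \<theta>)) (mix w2 \<theta> (1 - (1 - \<theta>))) \<le> renyi_moment \<alpha> (mix w1 \<theta> \<theta>) (mix w2 \<theta> (1 - \<theta>))")
      case True
      then show ?thesis using A by (intro exI[where x=x1] exI[where x=x1'] exI[where x=h1]) (auto simp: max_def)
    next
      case False
      then show ?thesis using B by (intro exI[where x=x0] exI[where x=x0'] exI[where x=h0]) (auto simp: max_def)
    qed
  }
qed

end
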